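(* Let $v_1,v_2$ be two vertices of $\mathscr{BG}_+(n)$ with associated collections $\mathscr{D}_1,\mathscr{D}_2$, such that $\bigcap\mathscr{D}_1=\{i\}=\bigcap\mathscr{D}_2$ for some $i\in N$. Then $v_1$ and $v_2$ are adjacent if and only if either $\mathscr{D}_1\subseteq\mathscr{D}_2$ or $\mathscr{D}_2\subseteq\mathscr{D}_1$, and $|\mathscr{D}_1\,\Delta\,\mathscr{D}_2|=1$.
   Context: $N=\{1,\ldots,n\}$; a game is a map $v:2^N\to\mathbb{R}$ with $v(\varnothing)=0$. $\mathscr{BG}_+(n)$ is the polytope (in $\mathbb{R}^{2^N\setminus\{\varnothing,N\}}$) of games with $v\geqslant0$, $v(N)=1$ and nonempty core $C(v)=\{x\in\mathbb{R}^N:\sum_{i\in S}x_i\geqslant v(S)\ \forall S,\ \sum_{i\in N}x_i=v(N)\}$. The collection associated to a vertex $v$ is $\mathscr{D}=\{S:\varnothing\neq S\subsetneq N,\ v(S)=1\}$, and $\bigcap\mathscr{D}$ denotes the intersection of its members. Two vertices are adjacent if they lie on a common edge of the polytope. $\Delta$ is symmetric difference. *)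

theory Defs
  imports "HOL-Analysis.Analysis"
begin

text \<open>Player set N is the finite type 'n (N = UNIV). A game is a vector indexed by all
  coalitions; the coordinates at the empty set and at N are fixed (0 and 1), so the set
  below is an affine copy of the polytope BG_+(n) living in R^(2^N minus empty set and N).\<close>

definition core :: "real ^ ('n::finite set) \<Rightarrow> ('n \<Rightarrow> real) set" where
  "core v = {x. (\<forall>S. sum x S \<ge> v $ S) \<and> sum x UNIV = v $ UNIV}"

definition BGplus :: "(real ^ ('n::finite set)) set" where
  "BGplus = {v. v $ {} = 0 \<and> v $ UNIV = 1 \<and> (\<forall>S. v $ S \<ge> 0) \<and> core v \<noteq> {}}"

definition is_vertex :: "real ^ ('n::finite set) \<Rightarrow> bool" where
  "is_vertex v \<longleftrightarrow> v extreme_point_of BGplus"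

definition is_edge :: "(real ^ ('n::finite set)) set \<Rightarrow> bool" where
  "is_edge E \<longleftrightarrow> E face_of BGplus \<and> aff_dim E = 1"

definition adjacent :: "real ^ ('n::finite set) \<Rightarrow> real ^ ('n set) \<Rightarrow> bool" where
  "adjacent v1 v2 \<longleftrightarrow> (\<exists>E. is_edge E \<and> v1 \<in> E \<and> v2 \<in> E)"

definition coll :: "real ^ ('n::finite set) \<Rightarrow> 'n set set" where
  "coll v = {S. S \<noteq> {} \<and> S \<noteq> UNIV \<and> v $ S = 1}"

end

theory Submission
  imports Defs
begin

definition Qi :: "'n::finite \<Rightarrow> (real ^ ('n set)) set" where
  "Qi i = {v. v $ {} = 0 \<and> v $ UNIV = 1 \<and> (\<forall>T. 0 \<le> v $ T \<and> v $ T \<le> (if i \<in> T then 1 else 0))}"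

lemma Qi_sub: "Qi i \<subseteq> BGplus"
proof
  fix v assume v: "v \<in> Qi i"
  have "(\<lambda>j. if j = i then 1 else 0::real) \<in> core v"
    using v unfolding core_def Qi_def by (auto simp: sum.delta)
  then show "v \<in> BGplus" using v unfolding BGplus_def Qi_def by auto
qed

lemma bg_bounds:
  assumes "v \<in> BGplus"
  shows "0 \<le> v $ S \<and> v $ S \<le> 1"
proof -
  obtain x where x: "x \<in> core v" using assms unfolding BGplus_def by auto
  have v0: "\<forall>S. v $ S \<ge> 0" "v $ UNIV = 1" using assms unfolding BGplus_def by auto
  have xn: "x j \<ge> 0" for j
  proof -
    have "sum x {j} \<ge> v $ {j}" using x unfolding core_def by blast
    then have "x j \<ge> v $ {j}" by simp
    then show ?thesis using v0 by (meson order_trans)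
  qed
  have "v $ S \<le> sum x S" using x unfolding core_def by auto
  also have "\<dots> \<le> sum x UNIV" by (rule sum_mono2) (auto simp: xn)
  also have "\<dots> = 1" using x v0 unfolding core_def by auto
  finally show ?thesis using v0 by auto
qed

lemma in_Qi:
  assumes "v \<in> BGplus" and "\<Inter>(coll v) = {i}"
  shows "v \<in> Qi i"
proof -
  obtain x where x: "x \<in> core v" using assms unfolding BGplus_def by auto
  have v0: "\<forall>S. v $ S \<ge> 0" "v $ UNIV = 1" "v $ {} = 0" using assms unfolding BGplus_def by auto
  have xn: "x j \<ge> 0" for j
  proof -
    have "sum x {j} \<ge> v $ {j}" using x unfolding core_def by blast
    then have "x j \<ge> v $ {j}" by simp
    then show ?thesis using v0 by (meson order_trans)
  qed
  have su: "sum x UNIV = 1" using x v0 unfolding core_def by auto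
  have xz: "x j = 0" if "j \<noteq> i" for j
  proof -
    have "j \<notin> \<Inter>(coll v)" using assms(2) that by auto
    then obtain S where S: "S \<in> coll v" "j \<notin> S" by blast
    have "v $ S = 1" using S(1) unfolding coll_def by simp
    moreover have "v $ S \<le> sum x S" using x unfolding core_def by blast
    ultimately have "sum x S \<ge> 1" by simp
    moreover have "sum x UNIV = sum x S + sum x (UNIV - S)"
      by (metis add.commute finite sum.subset_diff top_greatest)
    moreover have "sum x (UNIV - S) \<ge> x j"
      by (rule member_le_sum) (use S xn in auto)
    ultimately show ?thesis using su xn[of j] by linarith
  qed
  have "v $ T \<le> (if i \<in> T then 1 else 0)" for T
  proof (cases "i \<in> T")
    case True then show ?thesis using bg_bounds[OF assms(1)] by auto
  next
    case False
    have "sum x T = 0" by (rule sum.neutral) (metis False xz)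
    moreover have "v $ T \<le> sum x T" using x unfolding core_def by blast
    ultimately show ?thesis using False by simp
  qed
  then show ?thesis unfolding Qi_def using v0 by auto
qed

lemma mix_Qi:
  assumes a: "a \<in> Qi i" and b: "b \<in> Qi i" and c: "\<And>T. c $ T = a $ T \<or> c $ T = b $ T"
  shows "c \<in> Qi i"
proof -
  have a0: "a $ {} = 0" "a $ UNIV = 1" and aa: "\<And>T. 0 \<le> a $ T \<and> a $ T \<le> (if i \<in> T then 1 else 0)"
    using a unfolding Qi_def by blast+
  have b0: "b $ {} = 0" "b $ UNIV = 1" and bb: "\<And>T. 0 \<le> b $ T \<and> b $ T \<le> (if i \<in> T then 1 else 0)"
    using b unfolding Qi_def by blast+
  have "c $ {} = 0" using c[of "{}"] a0 b0 by auto
  moreover have "c $ UNIV = 1" using c[of UNIV] a0 b0 by auto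
  moreover have "0 \<le> c $ T \<and> c $ T \<le> (if i \<in> T then 1 else 0)" for T
    using c[of T] aa[of T] bb[of T] by metis
  ultimately show ?thesis unfolding Qi_def by blast
qed

lemma zero_one:
  assumes "is_vertex v" and "\<Inter>(coll v) = {i}"
  shows "v $ T = 0 \<or> v $ T = 1"
proof (rule ccontr)
  assume "\<not> ?thesis"
  have ext: "v extreme_point_of BGplus" using assms(1) unfolding is_vertex_def .
  then have vB: "v \<in> BGplus" unfolding extreme_point_of_def by auto
  have vQ: "v \<in> Qi i" by (rule in_Qi[OF vB assms(2)])
  have b: "0 \<le> v $ T" "v $ T \<le> 1" using bg_bounds[OF vB] by auto
  with \<open>\<not> ?thesis\<close> have lt: "0 < v $ T" "v $ T < 1" by auto
  have vT: "v $ T \<le> (if i \<in> T then 1 else 0)" and v0: "v $ {} = 0" and v1: "v $ UNIV = 1"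
    and vall: "\<And>U. 0 \<le> v $ U \<and> v $ U \<le> (if i \<in> U then 1 else 0)"
    using vQ unfolding Qi_def by blast+
  have iT: "i \<in> T" using vT lt by (cases "i \<in> T") auto
  have TN: "T \<noteq> {}" "T \<noteq> UNIV" using v0 v1 lt by auto
  define e where "e = min (v $ T) (1 - v $ T)"
  have e: "e > 0" "e \<le> v $ T" "e \<le> 1 - v $ T" using lt unfolding e_def by auto
  define a where "a = (\<chi> U. if U = T then v $ T - e else v $ U)"
  define b where "b = (\<chi> U. if U = T then v $ T + e else v $ U)"
  have aQ: "a \<in> Qi i" unfolding Qi_def
  proof (intro CollectI conjI allI)
    fix U show "0 \<le> a $ U" using vall[of U] e unfolding a_def by simp
    show "a $ U \<le> (if i \<in> U then 1 else 0)" using vall[of U] e iT unfolding a_def by (simp split: if_splits)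
  qed (use v0 v1 TN in \<open>simp_all add: a_def\<close>)
  have bQ: "b \<in> Qi i" unfolding Qi_def
  proof (intro CollectI conjI allI)
    fix U show "0 \<le> b $ U" using vall[of U] e unfolding b_def by simp
    show "b $ U \<le> (if i \<in> U then 1 else 0)" using vall[of U] e iT unfolding b_def by (simp split: if_splits)
  qed (use v0 v1 TN in \<open>simp_all add: b_def\<close>)
  have "a \<noteq> b"
  proof
    assume "a = b" then have "a $ T = b $ T" by simp
    then show False using e unfolding a_def b_def by simp
  qed
  moreover have "v = (1 - 1/2) *\<^sub>R a + (1/2) *\<^sub>R b"
    unfolding a_def b_def by (simp add: vec_eq_iff field_simps)
  ultimately have "v \<in> open_segment a b" unfolding in_segment by (intro conjI exI[of _ "1/2"]) auto
  then show False using ext aQ bQ Qi_sub unfolding extreme_point_of_def by blast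
qed

theorem theorem13:
  fixes v1 v2 :: "real ^ ('n::finite set)" and i :: 'n
  assumes "is_vertex v1" and "is_vertex v2" and "v1 \<noteq> v2"
    and "\<Inter>(coll v1) = {i}" and "\<Inter>(coll v2) = {i}"
  shows "adjacent v1 v2 \<longleftrightarrow>
    ((coll v1 \<subseteq> coll v2 \<or> coll v2 \<subseteq> coll v1) \<and>
     card ((coll v1 - coll v2) \<union> (coll v2 - coll v1)) = 1)"
proof -
  have v1B: "v1 \<in> BGplus" using assms(1) unfolding is_vertex_def extreme_point_of_def by auto
  have v2B: "v2 \<in> BGplus" using assms(2) unfolding is_vertex_def extreme_point_of_def by auto
  have Q1: "v1 \<in> Qi i" by (rule in_Qi[OF v1B assms(4)])
  have Q2: "v2 \<in> Qi i" by (rule in_Qi[OF v2B assms(5)])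
  have z1: "v1 $ T = 0 \<or> v1 $ T = 1" for T using zero_one[OF assms(1) assms(4)] .
  have z2: "v2 $ T = 0 \<or> v2 $ T = 1" for T using zero_one[OF assms(2) assms(5)] .
  define D where "D = (coll v1 - coll v2) \<union> (coll v2 - coll v1)"
  have Deq: "T \<in> D \<longleftrightarrow> v1 $ T \<noteq> v2 $ T" for T
  proof (cases "T = {} \<or> T = UNIV")
    case True then show ?thesis using Q1 Q2 unfolding D_def coll_def Qi_def by auto
  next
    case False then show ?thesis using z1[of T] z2[of T] unfolding D_def coll_def by auto
  qed
  obtain S where S: "v1 $ S \<noteq> v2 $ S" using assms(3) by (auto simp: vec_eq_iff)
  show ?thesis
  proof
    assume "adjacent v1 v2"
    then obtain E where E: "E face_of BGplus" "aff_dim E = 1" "v1 \<in> E" "v2 \<in> E"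
      unfolding adjacent_def is_edge_def by auto
    have uniq: "T = S" if T: "v1 $ T \<noteq> v2 $ T" for T
    proof (rule ccontr)
      assume TS: "T \<noteq> S"
      define w1 where "w1 = (\<chi> U. if U = S then v2 $ U else v1 $ U)"
      define w2 where "w2 = (\<chi> U. if U = S then v1 $ U else v2 $ U)"
      have w1Q: "w1 \<in> Qi i" by (rule mix_Qi[OF Q1 Q2]) (simp add: w1_def)
      have w2Q: "w2 \<in> Qi i" by (rule mix_Qi[OF Q1 Q2]) (simp add: w2_def)
      define m where "m = (1 - 1/2) *\<^sub>R v1 + (1/2::real) *\<^sub>R v2"
      have "m \<in> closed_segment v1 v2" unfolding m_def in_segment by (intro exI[of _ "1/2"]) auto
      then have mE: "m \<in> E"
        using E face_of_imp_convex closed_segment_subset by blast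
      have "w1 \<noteq> w2"
      proof
        assume "w1 = w2" then have "w1 $ S = w2 $ S" by simp
        then show False using S unfolding w1_def w2_def by simp
      qed
      moreover have "m = (1 - 1/2) *\<^sub>R w1 + (1/2) *\<^sub>R w2"
        unfolding m_def w1_def w2_def by (simp add: vec_eq_iff field_simps)
      ultimately have "m \<in> open_segment w1 w2" unfolding in_segment by (intro conjI exI[of _ "1/2"]) auto
      then have w1E: "w1 \<in> E" using E(1) mE w1Q w2Q Qi_sub unfolding face_of_def by blast
      have cE: "collinear E" using E(2) by (simp add: collinear_aff_dim)
      have "{v1, v2, w1} \<subseteq> E" using E(3,4) w1E by blast
      then have "collinear {v1, v2, w1}" by (rule collinear_subset[OF cE])
      then have "w1 \<in> affine hull {v1, v2}" using collinear_3_affine_hull assms(3) by blast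
      then obtain u u' where uu: "u + u' = 1" "w1 = u *\<^sub>R v1 + u' *\<^sub>R v2"
        unfolding affine_hull_2 by blast
      have u': "u' = 1 - u" using uu(1) by simp
      have eS: "v2 $ S = u * v1 $ S + (1 - u) * v2 $ S"
        using arg_cong[OF uu(2), of "\<lambda>z. z $ S"] u' unfolding w1_def by simp
      have eT: "v1 $ T = u * v1 $ T + (1 - u) * v2 $ T"
        using arg_cong[OF uu(2), of "\<lambda>z. z $ T"] TS u' unfolding w1_def by simp
      have d1: "u * (v1 $ S - v2 $ S) = u * v1 $ S - u * v2 $ S" "(1 - u) * v2 $ S = v2 $ S - u * v2 $ S"
        by (simp_all add: right_diff_distrib left_diff_distrib)
      have "u * (v1 $ S - v2 $ S) = 0" using eS d1 by linarith
      then have "u = 0" using S by simp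
      have d2: "(1 - u) * (v2 $ T - v1 $ T) = (1 - u) * v2 $ T - (1 - u) * v1 $ T" "(1 - u) * v1 $ T = v1 $ T - u * v1 $ T"
        by (simp_all add: right_diff_distrib left_diff_distrib)
      have "(1 - u) * (v2 $ T - v1 $ T) = 0" using eT d2 by linarith
      then have "1 - u = 0" using T by simp
      then show False using \<open>u = 0\<close> by simp
    qed
    have DT: "T \<in> D \<longleftrightarrow> T = S" for T using Deq[of T] uniq[of T] S by blast
    then have DS: "D = {S}" by blast
    then have DS': "(coll v1 - coll v2) \<union> (coll v2 - coll v1) = {S}" unfolding D_def .
    have mem: "((T \<in> coll v1 \<and> T \<notin> coll v2) \<or> (T \<in> coll v2 \<and> T \<notin> coll v1)) \<longleftrightarrow> T = S" for T
      using DT[of T] unfolding D_def by simp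
    have "coll v1 \<subseteq> coll v2 \<or> coll v2 \<subseteq> coll v1"
    proof (cases "S \<in> coll v1")
      case True
      then have "coll v2 \<subseteq> coll v1" using mem by (metis subsetI)
      then show ?thesis by (rule disjI2)
    next
      case False
      then have "coll v1 \<subseteq> coll v2" using mem by (metis subsetI)
      then show ?thesis by (rule disjI1)
    qed
    then show "(coll v1 \<subseteq> coll v2 \<or> coll v2 \<subseteq> coll v1) \<and>
     card ((coll v1 - coll v2) \<union> (coll v2 - coll v1)) = 1"
      using DS' by simp
  next
    assume H: "(coll v1 \<subseteq> coll v2 \<or> coll v2 \<subseteq> coll v1) \<and>
     card ((coll v1 - coll v2) \<union> (coll v2 - coll v1)) = 1"
    then obtain S' where "D = {S'}" unfolding D_def by (meson card_1_singletonE)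
    then have diff: "v1 $ T \<noteq> v2 $ T \<longleftrightarrow> T = S'" for T using Deq by auto
    have bQ: "\<And>a T. a \<in> BGplus \<Longrightarrow> 0 \<le> a $ T \<and> a $ T \<le> 1" using bg_bounds by blast
    let ?E = "closed_segment v1 v2"
    have sub: "?E \<subseteq> BGplus"
    proof -
      have "convex (Qi i)" unfolding convex_alt
      proof (intro ballI allI impI)
        fix a b :: "real ^ ('n set)" and u :: real
        assume a: "a \<in> Qi i" and b: "b \<in> Qi i" and u: "0 \<le> u \<and> u \<le> 1"
        have a0: "a $ {} = 0" "a $ UNIV = 1" and aa: "\<And>T. 0 \<le> a $ T \<and> a $ T \<le> (if i \<in> T then 1 else 0)"
          using a unfolding Qi_def by blast+
        have b0: "b $ {} = 0" "b $ UNIV = 1" and bb: "\<And>T. 0 \<le> b $ T \<and> b $ T \<le> (if i \<in> T then 1 else 0)"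
          using b unfolding Qi_def by blast+
        have c1: "((1 - u) *\<^sub>R a + u *\<^sub>R b) $ {} = 0" using a0 b0 by simp
        have c2: "((1 - u) *\<^sub>R a + u *\<^sub>R b) $ UNIV = 1" using a0 b0 by (simp add: algebra_simps)
        have c3: "0 \<le> ((1 - u) *\<^sub>R a + u *\<^sub>R b) $ T \<and> ((1 - u) *\<^sub>R a + u *\<^sub>R b) $ T \<le> (if i \<in> T then 1 else 0)" for T
        proof -
          have "(1 - u) * a $ T + u * b $ T \<le> (if i \<in> T then 1 else 0)"
            by (rule convex_bound_le) (use aa[of T] bb[of T] u in auto)
          moreover have "0 \<le> (1 - u) * a $ T + u * b $ T"
            using aa[of T] bb[of T] u by simp
          ultimately show ?thesis by simp
        qed
        show "(1 - u) *\<^sub>R a + u *\<^sub>R b \<in> Qi i" unfolding Qi_def using c1 c2 c3 by blast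
      qed
      then have "?E \<subseteq> Qi i" using Q1 Q2 closed_segment_subset by blast
      then show ?thesis using Qi_sub by blast
    qed
    have face: "?E face_of BGplus"
      unfolding face_of_def
    proof (intro conjI ballI impI)
      show "?E \<subseteq> BGplus" by (rule sub)
      show "convex ?E" by simp
      fix a b x assume a: "a \<in> BGplus" and b: "b \<in> BGplus" and x: "x \<in> ?E"
        and xab: "x \<in> open_segment a b"
      obtain t where t: "0 \<le> t" "t \<le> 1" "x = (1 - t) *\<^sub>R v1 + t *\<^sub>R v2" using x unfolding in_segment by auto
      obtain u where u: "0 < u" "u < 1" "x = (1 - u) *\<^sub>R a + u *\<^sub>R b" using xab unfolding in_segment by auto
      have agree: "a $ T = v1 $ T \<and> b $ T = v1 $ T" if "T \<noteq> S'" for T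
      proof -
        have xT0: "x $ T = (1 - t) * v1 $ T + t * v2 $ T" using t(3) by simp
        have xT: "x $ T = v1 $ T" using xT0 diff[of T] that by (simp add: algebra_simps)
        have xT2: "x $ T = (1 - u) * a $ T + u * b $ T" using u(3) by simp
        have ab: "0 \<le> a $ T" "a $ T \<le> 1" "0 \<le> b $ T" "b $ T \<le> 1" using bQ a b by auto
        show ?thesis
        proof (cases "v1 $ T = 0")
          case True
          have "(1 - u) * a $ T \<ge> 0" "u * b $ T \<ge> 0" using ab u by auto
          then have "(1 - u) * a $ T = 0" "u * b $ T = 0" using xT xT2 True by linarith+
          then show ?thesis using u True by auto
        next
          case False
          then have F: "v1 $ T = 1" using z1 by auto
          have "(1 - u) * (1 - a $ T) \<ge> 0" "u * (1 - b $ T) \<ge> 0" using ab u by auto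
          moreover have "(1 - u) * (1 - a $ T) + u * (1 - b $ T) = 0"
            using xT xT2 F by (simp add: algebra_simps)
          ultimately have "(1 - u) * (1 - a $ T) = 0" "u * (1 - b $ T) = 0" by linarith+
          then show ?thesis using u F by auto
        qed
      qed
      have inE: "c \<in> ?E" if c: "c \<in> BGplus" "\<And>T. T \<noteq> S' \<Longrightarrow> c $ T = v1 $ T" for c
      proof -
        have d: "v2 $ S' \<noteq> v1 $ S'" using diff[of S'] by metis
        have c01: "0 \<le> c $ S'" "c $ S' \<le> 1" using bQ c(1) by auto
        define s where "s = (c $ S' - v1 $ S') / (v2 $ S' - v1 $ S')"
        have s01: "0 \<le> s \<and> s \<le> 1"
        proof (cases "v1 $ S' = 0")
          case True then have "v2 $ S' = 1" using z2[of S'] d by auto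
          then show ?thesis using True c01 unfolding s_def by auto
        next
          case False then have "v1 $ S' = 1" "v2 $ S' = 0" using z1[of S'] z2[of S'] d by auto
          then show ?thesis using c01 unfolding s_def by auto
        qed
        have "c = (1 - s) *\<^sub>R v1 + s *\<^sub>R v2"
        proof (subst vec_eq_iff, intro allI)
          fix T show "c $ T = ((1 - s) *\<^sub>R v1 + s *\<^sub>R v2) $ T"
          proof (cases "T = S'")
            case True
            have e: "s * (v2 $ S' - v1 $ S') = c $ S' - v1 $ S'" using d unfolding s_def by simp
            have e2: "s * v2 $ S' - s * v1 $ S' = c $ S' - v1 $ S'" using e by (simp add: right_diff_distrib)
            have "((1 - s) *\<^sub>R v1 + s *\<^sub>R v2) $ S' = v1 $ S' - s * v1 $ S' + s * v2 $ S'"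
              by (simp add: left_diff_distrib)
            then show ?thesis using e2 True by simp
          next
            case False then show ?thesis using c(2)[OF False] diff[of T] by (simp add: algebra_simps)
          qed
        qed
        then show ?thesis unfolding in_segment using s01 by blast
      qed
      show "a \<in> ?E" using inE[OF a] agree by blast
      show "b \<in> ?E" using inE[OF b] agree by blast
    qed
    have "aff_dim ?E = 1" using assms(3) by (simp add: segment_convex_hull aff_dim_convex_hull)
    then show "adjacent v1 v2" unfolding adjacent_def is_edge_def using face
      by (intro exI[of _ ?E]) auto
  qed
qed

end
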